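(* Let $G$ be a finite connected graph with node set $V$ and radius $\operatorname{rad}(G)$. Suppose a one-to-all distance based algorithm for computing the radius of $G$ performs one-to-all distance queries from exactly the nodes of a set $L\subseteq V$. Then for every ranking $r$ of $V$, the set $L\cup A_r(L)$ is a radius certificate of $G$. Consequently, any one-to-all distance based algorithm for the radius performs at least $\frac{1}{2}|L_{OPT}|$ one-to-all distance queries, where $|L_{OPT}|$ is the minimum size of a radius certificate of $G$ (equivalently, the minimum size of a covering of $V$ with the collection $\{\overline{B}(u,\operatorname{rad}(G)) : u\in V\}$).
   Context: $G$ is an undirected unweighted connected graph with finite node set $V$; $d(u,v)$ is the shortest-path distance, $e(u)=\max_{v\in V}d(u,v)$ the eccentricity, $\operatorname{rad}(G)=\min_u e(u)$. A ranking $r$ is an injective map from $V$ to a totally ordered set. The antipode $A_r(u)$ of $u$ is the node $v$ maximizing the pair $(d(u,v),r(v))$ in lexicographic order (a furthest node from $u$ of highest rank), and $A_r(W)=\{A_r(u):u\in W\}$. The coball is $\overline{B}(u,\rho)=\{v\in V: d(u,v)\ge \rho\}$. A radius certificate is a set $L\subseteq V$ such that every $u\in V$ has $\max_{x\in L}d(u,x)\ge \operatorname{rad}(G)$. A one-to-all distance query from a node $x$ returns the vector $(d(x,v))_{v\in V}$. A one-to-all distance based algorithm is one that accesses the graph only through one-to-all distance queries and relies solely on the distances known from its queries, the triangle inequality and non-negativity of distances for bounding unknown distances (so its correctness certifies, for every node $u$, that $e(u)\ge\operatorname{rad}(G)$ by such reasoning). *)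

theory Defs
  imports Main "HOL-Library.Extended_Real"
begin

definition is_walk :: "('a \<Rightarrow> 'a \<Rightarrow> bool) \<Rightarrow> 'a list \<Rightarrow> bool" where
  "is_walk E xs \<longleftrightarrow> xs \<noteq> [] \<and> (\<forall>i. Suc i < length xs \<longrightarrow> E (xs ! i) (xs ! Suc i))"

definition graph_connected :: "'a set \<Rightarrow> ('a \<Rightarrow> 'a \<Rightarrow> bool) \<Rightarrow> bool" where
  "graph_connected V E \<longleftrightarrow> V \<noteq> {} \<and>
     (\<forall>u\<in>V. \<forall>v\<in>V. \<exists>xs. is_walk E xs \<and> hd xs = u \<and> last xs = v)"

definition gdist :: "('a \<Rightarrow> 'a \<Rightarrow> bool) \<Rightarrow> 'a \<Rightarrow> 'a \<Rightarrow> nat" where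
  "gdist E u v = (LEAST n. \<exists>xs. is_walk E xs \<and> hd xs = u \<and> last xs = v \<and> length xs = Suc n)"

definition ecc :: "'a set \<Rightarrow> ('a \<Rightarrow> 'a \<Rightarrow> bool) \<Rightarrow> 'a \<Rightarrow> nat" where
  "ecc V E u = Max (gdist E u ` V)"

definition grad :: "'a set \<Rightarrow> ('a \<Rightarrow> 'a \<Rightarrow> bool) \<Rightarrow> nat" where
  "grad V E = Min (ecc V E ` V)"

text \<open>Antipode w.r.t. ranking r: furthest node of highest rank
  (maximizer of the pair (d(u,v), r(v)) in lexicographic order).\<close>
definition antipode :: "'a set \<Rightarrow> ('a \<Rightarrow> 'a \<Rightarrow> bool) \<Rightarrow> ('a \<Rightarrow> 'b::linorder) \<Rightarrow> 'a \<Rightarrow> 'a" where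
  "antipode V E r u = (THE v. v \<in> V \<and>
     (\<forall>w\<in>V. gdist E u w < gdist E u v \<or> (gdist E u w = gdist E u v \<and> r w \<le> r v)))"

definition antipodes :: "'a set \<Rightarrow> ('a \<Rightarrow> 'a \<Rightarrow> bool) \<Rightarrow> ('a \<Rightarrow> 'b::linorder) \<Rightarrow> 'a set \<Rightarrow> 'a set" where
  "antipodes V E r W = antipode V E r ` W"

definition coball :: "'a set \<Rightarrow> ('a \<Rightarrow> 'a \<Rightarrow> bool) \<Rightarrow> 'a \<Rightarrow> nat \<Rightarrow> 'a set" where
  "coball V E u \<rho> = {v \<in> V. gdist E u v \<ge> \<rho>}"

definition radius_certificate :: "'a set \<Rightarrow> ('a \<Rightarrow> 'a \<Rightarrow> bool) \<Rightarrow> 'a set \<Rightarrow> bool" where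
  "radius_certificate V E L \<longleftrightarrow> L \<subseteq> V \<and> (\<forall>u\<in>V. \<exists>x\<in>L. gdist E u x \<ge> grad V E)"

text \<open>A function D on V x V is consistent with the one-to-all queries from L if it
  agrees with the true distances on all queried pairs and satisfies the generic
  metric axioms (non-negativity, triangle inequality; also symmetry and zero
  diagonal, which are valid for any undirected graph).\<close>
definition query_consistent ::
  "'a set \<Rightarrow> ('a \<Rightarrow> 'a \<Rightarrow> bool) \<Rightarrow> 'a set \<Rightarrow> ('a \<Rightarrow> 'a \<Rightarrow> real) \<Rightarrow> bool" where
  "query_consistent V E L D \<longleftrightarrow>
     (\<forall>x\<in>L. \<forall>v\<in>V. D x v = real (gdist E x v)) \<and>
     (\<forall>a\<in>V. \<forall>b\<in>V. D a b \<ge> 0) \<and>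
     (\<forall>a\<in>V. D a a = 0) \<and>
     (\<forall>a\<in>V. \<forall>b\<in>V. D a b = D b a) \<and>
     (\<forall>a\<in>V. \<forall>b\<in>V. \<forall>c\<in>V. D a c \<le> D a b + D b c)"

text \<open>The queries from L suffice for a one-to-all distance based algorithm to certify
  e(u) >= rad(G) for every u: every distance function consistent with the
  query answers gives u eccentricity at least rad(G).\<close>
definition otoa_certifies_radius :: "'a set \<Rightarrow> ('a \<Rightarrow> 'a \<Rightarrow> bool) \<Rightarrow> 'a set \<Rightarrow> bool" where
  "otoa_certifies_radius V E L \<longleftrightarrow>
     (\<forall>u\<in>V. \<forall>D. query_consistent V E L D \<longrightarrow> (\<exists>v\<in>V. D u v \<ge> real (grad V E)))"

end

theory Submission
  imports Defs
begin

lemma walk_single: "is_walk E [x]"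
  by (simp add: is_walk_def)

lemma walk_Cons2: "is_walk E (x # y # zs) \<longleftrightarrow> E x y \<and> is_walk E (y # zs)"
proof
  assume "is_walk E (x # y # zs)"
  then have h: "\<And>i. Suc i < length (x # y # zs) \<Longrightarrow> E ((x#y#zs) ! i) ((x#y#zs) ! Suc i)"
    by (simp add: is_walk_def)
  have "E x y" using h[of 0] by simp
  moreover have "is_walk E (y # zs)"
    unfolding is_walk_def using h by (auto simp del: nth_Cons_Suc) (metis Suc_less_eq h length_Cons nth_Cons_Suc)
  ultimately show "E x y \<and> is_walk E (y # zs)" by simp
next
  assume a: "E x y \<and> is_walk E (y # zs)"
  show "is_walk E (x # y # zs)"
    unfolding is_walk_def
  proof (intro conjI allI impI)
    fix i assume i: "Suc i < length (x # y # zs)"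
    show "E ((x # y # zs) ! i) ((x # y # zs) ! Suc i)"
    proof (cases i)
      case 0 then show ?thesis using a by simp
    next
      case (Suc j) then show ?thesis using a i by (simp add: is_walk_def)
    qed
  qed simp
qed

lemma walk_tl: "is_walk E (x # xs) \<Longrightarrow> xs \<noteq> [] \<Longrightarrow> is_walk E xs \<and> E x (hd xs)"
  by (cases xs) (auto simp: walk_Cons2)

lemma walk_append:
  "is_walk E xs \<Longrightarrow> is_walk E ys \<Longrightarrow> last xs = hd ys \<Longrightarrow>
   is_walk E (xs @ tl ys) \<and> hd (xs @ tl ys) = hd xs \<and> last (xs @ tl ys) = last ys"
proof (induction xs)
  case Nil then show ?case by (simp add: is_walk_def)
next
  case (Cons x xs)
  show ?case
  proof (cases "xs = []")
    case True
    then have "ys \<noteq> []" using Cons.prems by (simp add: is_walk_def)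
    then show ?thesis using True Cons.prems by (cases ys) auto
  next
    case False
    from walk_tl[OF Cons.prems(1) False] have w: "is_walk E xs" "E x (hd xs)" by auto
    have IH: "is_walk E (xs @ tl ys) \<and> hd (xs @ tl ys) = hd xs \<and> last (xs @ tl ys) = last ys"
      using Cons.IH[OF w(1) Cons.prems(2)] Cons.prems(3) False by simp
    obtain y r where yr: "xs @ tl ys = y # r" using False by (cases "xs @ tl ys") auto
    have hy: "y = hd xs" using IH yr by simp
    have "is_walk E (y # r)" using IH yr by metis
    then have "is_walk E (x # y # r)" using w hy walk_Cons2 by metis
    moreover have eq: "(x # xs) @ tl ys = x # y # r" using yr by simp
    moreover have "last (y # r) = last ys" using IH yr by metis
    ultimately show ?thesis by (metis last_ConsR list.distinct(1) list.sel(1))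
  qed
qed

lemma walk_rev:
  assumes sym: "\<And>u v. E u v \<longleftrightarrow> E v u"
  shows "is_walk E xs \<Longrightarrow> is_walk E (rev xs)"
proof (induction xs)
  case Nil then show ?case by (simp add: is_walk_def)
next
  case (Cons x xs)
  show ?case
  proof (cases "xs = []")
    case True then show ?thesis by (simp add: walk_single)
  next
    case False
    from walk_tl[OF Cons.prems False] have w: "is_walk E xs" "E x (hd xs)" by auto
    have r: "is_walk E (rev xs)" using Cons.IH w by simp
    have "is_walk E [hd xs, x]" using w sym by (simp add: walk_Cons2 walk_single)
    from walk_append[OF r this] False
    show ?thesis by (simp add: last_rev)
  qed
qed

locale G =
  fixes V :: "'a set" and E :: "'a \<Rightarrow> 'a \<Rightarrow> bool"
  assumes fin: "finite V"
    and sym: "\<And>u v. E u v \<longleftrightarrow> E v u"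
    and conn: "graph_connected V E"
begin

lemma dist_walk:
  assumes "u \<in> V" "v \<in> V"
  shows "\<exists>xs. is_walk E xs \<and> hd xs = u \<and> last xs = v \<and> length xs = Suc (gdist E u v)"
proof -
  obtain xs where xs: "is_walk E xs" "hd xs = u" "last xs = v"
    using conn assms unfolding graph_connected_def by blast
  then have "length xs = Suc (length xs - 1)" by (cases xs) (auto simp: is_walk_def)
  with xs have "\<exists>n xs. is_walk E xs \<and> hd xs = u \<and> last xs = v \<and> length xs = Suc n" by blast
  then show ?thesis unfolding gdist_def by (rule LeastI_ex)
qed

lemma dist_le:
  assumes "is_walk E xs" "hd xs = u" "last xs = v"
  shows "gdist E u v \<le> length xs - 1"
proof -
  have "length xs = Suc (length xs - 1)" using assms by (cases xs) (auto simp: is_walk_def)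
  then show ?thesis unfolding gdist_def using assms by (intro Least_le) blast
qed

lemma dist_self: "gdist E u u = 0"
  using dist_le[of "[u]" u u] by (simp add: walk_single)

lemma dist_sym: assumes "u \<in> V" "v \<in> V" shows "gdist E u v = gdist E v u"
proof -
  have "gdist E v u \<le> gdist E u v" if uv: "u \<in> V" "v \<in> V" for u v
  proof -
    obtain xs where xs: "is_walk E xs" "hd xs = u" "last xs = v" "length xs = Suc (gdist E u v)"
      using dist_walk[OF uv] by blast
    have "xs \<noteq> []" using xs by (auto simp: is_walk_def)
    then have "gdist E v u \<le> length (rev xs) - 1"
      using xs walk_rev[OF sym xs(1)] by (intro dist_le) (auto simp: hd_rev last_rev)
    then show ?thesis using xs by simp
  qed
  then show ?thesis using assms by (meson le_antisym)
qed

lemma dist_tri: assumes "u \<in> V" "v \<in> V" "w \<in> V"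
  shows "gdist E u w \<le> gdist E u v + gdist E v w"
proof -
  obtain xs where xs: "is_walk E xs" "hd xs = u" "last xs = v" "length xs = Suc (gdist E u v)"
    using dist_walk assms by blast
  obtain ys where ys: "is_walk E ys" "hd ys = v" "last ys = w" "length ys = Suc (gdist E v w)"
    using dist_walk assms by blast
  from walk_append[OF xs(1) ys(1)] xs ys have
    "is_walk E (xs @ tl ys)" "hd (xs @ tl ys) = u" "last (xs @ tl ys) = w" by auto
  then have "gdist E u w \<le> length (xs @ tl ys) - 1" by (rule dist_le)
  then show ?thesis using xs ys by simp
qed

lemma antipode_prop:
  fixes r :: "'a \<Rightarrow> 'b::linorder"
  assumes inj: "inj_on r V" and x: "x \<in> V"
  shows "antipode V E r x \<in> V \<and> (\<forall>w\<in>V. gdist E x w \<le> gdist E x (antipode V E r x))"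
proof -
  let ?P = "\<lambda>v. v \<in> V \<and>
     (\<forall>w\<in>V. gdist E x w < gdist E x v \<or> (gdist E x w = gdist E x v \<and> r w \<le> r v))"
  define m where "m = Max (gdist E x ` V)"
  define S where "S = {v \<in> V. gdist E x v = m}"
  have Vne: "V \<noteq> {}" using x by auto
  have "m \<in> gdist E x ` V" unfolding m_def using fin Vne by (intro Max_in) auto
  then have Sne: "S \<noteq> {}" unfolding S_def by auto
  have Sfin: "finite S" unfolding S_def using fin by auto
  have "Max (r ` S) \<in> r ` S" using Sne Sfin by (intro Max_in) auto
  then obtain v where v: "v \<in> S" "r v = Max (r ` S)" by auto
  have mge: "\<And>w. w \<in> V \<Longrightarrow> gdist E x w \<le> m" unfolding m_def using fin by auto
  have Pv: "?P v"
  proof -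
    have "v \<in> V" "gdist E x v = m" using v S_def by auto
    moreover have "gdist E x w < gdist E x v \<or> (gdist E x w = gdist E x v \<and> r w \<le> r v)"
      if w: "w \<in> V" for w
    proof (cases "gdist E x w = m")
      case True then have "w \<in> S" using w S_def by auto
      then have "r w \<le> r v" using v Sfin by auto
      then show ?thesis using True \<open>gdist E x v = m\<close> by simp
    next
      case False then show ?thesis using mge[OF w] \<open>gdist E x v = m\<close> by simp
    qed
    ultimately show ?thesis by blast
  qed
  have uniq: "\<And>v'. ?P v' \<Longrightarrow> v' = v"
  proof -
    fix v' assume P': "?P v'"
    have "gdist E x v' = gdist E x v \<and> r v' = r v"
      using P' Pv by (metis antisym less_not_sym order_less_imp_le)
    then show "v' = v" using inj P' Pv inj_on_def by metis
  qed
  have "antipode V E r x = v" unfolding antipode_def using Pv uniq by (rule the_equality)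
  then show ?thesis using Pv by auto
qed

lemma part1:
  fixes r :: "'a \<Rightarrow> 'b::linorder"
  assumes inj: "inj_on r V" and LV: "L \<subseteq> V" and Lne: "L \<noteq> {}"
    and cert: "otoa_certifies_radius V E L"
  shows "radius_certificate V E (L \<union> antipodes V E r L)"
proof -
  have Lfin: "finite L" using LV fin finite_subset by blast
  define f where "f a b x = \<bar>real (gdist E x a) - real (gdist E x b)\<bar>" for a b x
  define D where "D a b = Max (f a b ` L)" for a b
  have fin': "finite (f a b ` L)" "f a b ` L \<noteq> {}" for a b using Lfin Lne by auto
  have Dge: "\<And>a b x. x \<in> L \<Longrightarrow> f a b x \<le> D a b" unfolding D_def using fin' by auto
  have Dle: "\<And>a b c. (\<forall>x\<in>L. f a b x \<le> c) \<Longrightarrow> D a b \<le> c" unfolding D_def using fin' by auto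
  have qc: "query_consistent V E L D"
    unfolding query_consistent_def
  proof (intro conjI ballI)
    fix y v assume y: "y \<in> L" and v: "v \<in> V"
    have yV: "y \<in> V" using y LV by auto
    have "f y v y \<le> D y v" using Dge y by blast
    then have "real (gdist E y v) \<le> D y v" by (simp add: f_def dist_self)
    moreover have "D y v \<le> real (gdist E y v)"
    proof (rule Dle, intro ballI)
      fix x assume x: "x \<in> L"
      then have xV: "x \<in> V" using LV by auto
      have "gdist E x v \<le> gdist E x y + gdist E y v" using dist_tri xV yV v by blast
      moreover have "gdist E x y \<le> gdist E x v + gdist E v y" using dist_tri xV yV v by blast
      moreover have "gdist E v y = gdist E y v" using dist_sym yV v by auto
      ultimately show "f y v x \<le> real (gdist E y v)" unfolding f_def by linarith
    qed
    ultimately show "D y v = real (gdist E y v)" by simp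
  next
    fix a b assume "a \<in> V" "b \<in> V"
    obtain x where "x \<in> L" using Lne by auto
    then have "f a b x \<le> D a b" using Dge by blast
    moreover have "0 \<le> f a b x" unfolding f_def by simp
    ultimately show "0 \<le> D a b" by linarith
  next
    fix a assume "a \<in> V"
    have "D a a \<le> 0" by (rule Dle) (simp add: f_def)
    moreover obtain x where "x \<in> L" using Lne by auto
    then have "f a a x \<le> D a a" using Dge by blast
    ultimately show "D a a = 0" by (simp add: f_def)
  next
    fix a b assume "a \<in> V" "b \<in> V"
    have "f a b = f b a" unfolding f_def by (auto simp: abs_minus_commute)
    then show "D a b = D b a" unfolding D_def by simp
  next
    fix a b c assume "a \<in> V" "b \<in> V" "c \<in> V"
    show "D a c \<le> D a b + D b c"
    proof (rule Dle, intro ballI)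
      fix x assume x: "x \<in> L"
      have "f a c x \<le> f a b x + f b c x" unfolding f_def by linarith
      also have "\<dots> \<le> D a b + D b c" using Dge[OF x] by (simp add: add_mono)
      finally show "f a c x \<le> D a b + D b c" .
    qed
  qed
  have "\<exists>z\<in>L \<union> antipodes V E r L. grad V E \<le> gdist E u z" if u: "u \<in> V" for u
  proof -
    obtain v where v: "v \<in> V" "D u v \<ge> real (grad V E)"
      using cert u qc unfolding otoa_certifies_radius_def by blast
    have "\<exists>x\<in>L. real (grad V E) \<le> f u v x"
    proof (rule ccontr)
      assume "\<not> ?thesis"
      then have "D u v < real (grad V E)"
      proof -
        assume h: "\<not> (\<exists>x\<in>L. real (grad V E) \<le> f u v x)"
        have "D u v \<in> f u v ` L" unfolding D_def using fin' by (intro Max_in) auto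
        then show ?thesis using h by auto
      qed
      then show False using v by simp
    qed
    then obtain x where x: "x \<in> L" "real (grad V E) \<le> f u v x" by blast
    have xV: "x \<in> V" using x LV by auto
    show ?thesis
    proof (cases "gdist E x u \<ge> gdist E x v")
      case True
      then have "grad V E \<le> gdist E x u" using x(2) unfolding f_def by linarith
      then show ?thesis using x(1) dist_sym[OF u xV] by (metis UnI1)
    next
      case False
      then have h: "grad V E + gdist E x u \<le> gdist E x v" using x(2) unfolding f_def by linarith
      let ?a = "antipode V E r x"
      have a: "?a \<in> V" "gdist E x v \<le> gdist E x ?a" using antipode_prop[OF inj xV] v by auto
      have "gdist E x ?a \<le> gdist E x u + gdist E u ?a" using dist_tri xV u a by blast
      then have "grad V E \<le> gdist E u ?a" using h a by linarith
      moreover have "?a \<in> antipodes V E r L" unfolding antipodes_def using x by auto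
      ultimately show ?thesis by auto
    qed
  qed
  moreover have "antipodes V E r L \<subseteq> V"
    unfolding antipodes_def using antipode_prop[OF inj] LV by auto
  ultimately show ?thesis unfolding radius_certificate_def using LV by auto
qed

end

theorem theorem2:
  fixes V :: "'a set" and E :: "'a \<Rightarrow> 'a \<Rightarrow> bool" and L :: "'a set"
  assumes "finite V"
    and "\<And>u v. E u v \<Longrightarrow> u \<in> V \<and> v \<in> V"
    and "\<And>u v. E u v \<longleftrightarrow> E v u"
    and "graph_connected V E"
    and "L \<subseteq> V" and "L \<noteq> {}"
    and "otoa_certifies_radius V E L"
  shows "(\<forall>r :: 'a \<Rightarrow> 'b::linorder. inj_on r V \<longrightarrow>
            radius_certificate V E (L \<union> antipodes V E r L))
       \<and> real (card L) \<ge> real (Min (card ` {C. radius_certificate V E C})) / 2"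
proof -
  interpret G V E using assms by unfold_locales auto
  have P1: "\<And>r :: 'a \<Rightarrow> 'c::linorder. inj_on r V \<Longrightarrow> radius_certificate V E (L \<union> antipodes V E r L)"
    using part1 assms by blast
  obtain rn :: "'a \<Rightarrow> nat" where rn: "inj_on rn V"
    using finite_imp_inj_to_nat_seg[OF assms(1)] by blast
  let ?C = "L \<union> antipodes V E rn L"
  have C: "radius_certificate V E ?C" using P1[OF rn] .
  have Lfin: "finite L" using assms(1,5) finite_subset by blast
  have "card ?C \<le> card L + card (antipodes V E rn L)" by (rule card_Un_le)
  also have "card (antipodes V E rn L) \<le> card L" unfolding antipodes_def using Lfin by (rule card_image_le)
  finally have c2: "card ?C \<le> 2 * card L" by simp
  have "{C. radius_certificate V E C} \<subseteq> Pow V" unfolding radius_certificate_def by auto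
  then have "finite {C. radius_certificate V E C}" using assms(1) finite_subset by blast
  then have "Min (card ` {C. radius_certificate V E C}) \<le> card ?C" using C by (intro Min_le) auto
  with c2 have "Min (card ` {C. radius_certificate V E C}) \<le> 2 * card L" by linarith
  then have "real (Min (card ` {C. radius_certificate V E C})) \<le> 2 * real (card L)" by linarith
  moreover have "\<forall>r :: 'a \<Rightarrow> 'b::linorder. inj_on r V \<longrightarrow>
            radius_certificate V E (L \<union> antipodes V E r L)"
    using part1 assms by blast
  ultimately show ?thesis by simp
qed

end
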